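(* Let $n\in\mathbb{N}$ and let $c_k\in\mathbb{C}$, $0\le k\le\lfloor (n-1)/3\rfloor$. If $$\Pi\sum_{k=0}^{\lfloor (n-1)/3\rfloor}c_k(z+\overline z)^{n-2k}(z^2-z\overline z+\overline z^2)^k=0,$$ then $c_k=0$ for all $k$.
   Context: Let $\omega=e^{2\pi\mathrm{i}/3}$. For a polynomial $f(z,\overline z)$ in $z$ and $\overline z$ (viewed as a function of $z\in\mathbb{C}$), $\Pi f(z,\overline z):=\frac13\big(2f(z,\overline z)-f(\omega^2z,\omega\overline z)-f(\omega z,\omega^2\overline z)\big)$. *)

theory Defs
  imports Complex_Main
begin

definition omega :: complex where
  "omega = cis (2 * pi / 3)"

text \<open>A polynomial f(z, conj z) is represented as a function of two complex arguments
  F z w (w standing for conj z). Pi_op F is again such a two-argument function.\<close>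
definition Pi_op :: "(complex \<Rightarrow> complex \<Rightarrow> complex) \<Rightarrow> complex \<Rightarrow> complex \<Rightarrow> complex" where
  "Pi_op F z w = (2 * F z w - F (omega^2 * z) (omega * w) - F (omega * z) (omega^2 * w)) / 3"

end

theory Submission
  imports Defs "HOL-Analysis.Analysis" "HOL-Computational_Algebra.Polynomial"
begin

lemma omega_eq: "omega = Complex (-1/2) (sqrt 3 / 2)"
  unfolding omega_def by (simp add: cis.ctr cos_120 sin_120)

lemma omega3: "omega ^ 3 = 1"
proof -
  have "cis (2 * pi / 3) ^ 3 = cis (real 3 * (2 * pi / 3))" by (rule Complex.DeMoivre)
  then show ?thesis unfolding omega_def by simp
qed

lemma cnj_omega: "cnj omega = omega ^ 2"
  unfolding omega_eq by (simp add: complex_eq_iff power2_eq_square)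

lemma lin3: assumes "2 * (c::complex) = a + b" "2 * a = b + c" shows "c = a"
proof -
  have "2 * c - 2 * a = (a + b) - (b + c)" using assms by simp
  then have "3 * c = 3 * a" by (simp add: algebra_simps)
  then show ?thesis by simp
qed

definition ff :: "nat \<Rightarrow> (nat \<Rightarrow> complex) \<Rightarrow> complex \<Rightarrow> complex" where
  "ff n c z = (\<Sum>k<(n + 2) div 3. c k * (z + cnj z) ^ (n - 2 * k) * (z^2 - z * cnj z + cnj z^2) ^ k)"

lemma ff_rec:
  assumes "n \<ge> 1"
  shows "ff n c z = c 0 * (z + cnj z) ^ n + (z^3 + cnj z^3) * ff (n - 3) (\<lambda>k. c (Suc k)) z"
proof -
  have d: "(n + 2) div 3 = Suc ((n - 3 + 2) div 3)" using assms by presburger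
  have "ff n c z = c 0 * (z + cnj z) ^ n +
     (\<Sum>k<(n - 3 + 2) div 3. c (Suc k) * (z + cnj z) ^ (n - 2 * Suc k) * (z^2 - z * cnj z + cnj z^2) ^ Suc k)"
    unfolding ff_def d sum.lessThan_Suc_shift by simp
  also have "(\<Sum>k<(n - 3 + 2) div 3. c (Suc k) * (z + cnj z) ^ (n - 2 * Suc k) * (z^2 - z * cnj z + cnj z^2) ^ Suc k)
     = (z^3 + cnj z^3) * ff (n - 3) (\<lambda>k. c (Suc k)) z"
    unfolding ff_def sum_distrib_left
  proof (rule sum.cong)
    fix k assume "k \<in> {..<(n - 3 + 2) div 3}"
    then have e: "n - 2 * Suc k = Suc (n - 3 - 2 * k)" by auto
    have p: "z^3 + cnj z^3 = (z + cnj z) * (z^2 - z * cnj z + cnj z^2)"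
      by (simp add: algebra_simps power2_eq_square power3_eq_cube)
    show "c (Suc k) * (z + cnj z) ^ (n - 2 * Suc k) * (z^2 - z * cnj z + cnj z^2) ^ Suc k =
      (z^3 + cnj z^3) * (c (Suc k) * (z + cnj z) ^ (n - 3 - 2 * k) * (z^2 - z * cnj z + cnj z^2) ^ k)"
      unfolding e p by (simp add: algebra_simps)
  qed simp
  finally show ?thesis .
qed

lemma ff_cont: "continuous_on UNIV (ff n c)"
  unfolding ff_def by (intro continuous_intros)

lemma P_omega: "(omega * z)^3 + cnj (omega * z)^3 = z^3 + cnj z^3"
proof -
  have "cnj omega ^ 3 = 1" using omega3 by (metis complex_cnj_one complex_cnj_power)
  then show ?thesis using omega3 by (simp add: power_mult_distrib)
qed

lemma dense_zero:
  fixes h :: "complex \<Rightarrow> complex"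
  assumes hc: "continuous_on UNIV h" and hz: "\<And>z. (z^3 + cnj z^3) * h z = 0"
  shows "h z0 = 0"
proof -
  define p where "p = [: z0^3 + cnj z0^3, 3 * (z0^2 + cnj z0^2), 3 * (z0 + cnj z0), 2 :]"
  have pe: "poly p (of_real t) = (z0 + of_real t)^3 + cnj (z0 + of_real t)^3" for t
    unfolding p_def by (simp add: algebra_simps power2_eq_square power3_eq_cube)
  have "p \<noteq> 0" unfolding p_def by simp
  then have "finite {x. poly p x = 0}" by (rule poly_roots_finite)
  then have "finite (of_real -` {x. poly p x = 0} :: real set)"
    by (rule finite_vimageI) (simp add: inj_def)
  then have fin: "finite {t::real. poly p (of_real t) = 0}" by (simp add: vimage_def)
  have ev: "eventually (\<lambda>t. t \<notin> {t::real. poly p (of_real t) = 0}) (at 0)"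
    using islimpt_finite[OF fin] islimpt_iff_eventually by blast
  define g where "g t = h (z0 + of_real t)" for t :: real
  have gc: "isCont g 0"
    unfolding g_def
    by (rule continuous_on_interior[of UNIV], intro continuous_intros continuous_on_compose2[OF hc]) auto
  have "eventually (\<lambda>t. g t = 0) (at 0)"
    using ev
  proof eventually_elim
    case (elim t)
    then have "(z0 + of_real t)^3 + cnj (z0 + of_real t)^3 \<noteq> 0" using pe[of t] by simp
    then show ?case using hz[of "z0 + of_real t"] by (simp add: g_def)
  qed
  then have "(g \<longlongrightarrow> 0) (at 0)" by (rule tendsto_eventually)
  moreover have "(g \<longlongrightarrow> g 0) (at 0)" using gc isCont_def by blast
  ultimately have "g 0 = 0" using tendsto_unique trivial_limit_at by fastforce
  then show ?thesis by (simp add: g_def)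
qed

lemma main:
  "\<forall>c. (\<forall>z. ff n c (omega * z) = ff n c z) \<longrightarrow> (\<forall>k<(n + 2) div 3. c k = 0)"
proof (induction n rule: less_induct)
  case (less n)
  show ?case
  proof (rule allI, rule impI)
    fix c assume inv: "\<forall>z. ff n c (omega * z) = ff n c z"
    show "\<forall>k<(n + 2) div 3. c k = 0"
    proof (cases "n = 0")
      case True then show ?thesis by simp
    next
      case False
      then have n1: "n \<ge> 1" by simp
      define g where "g = ff (n - 3) (\<lambda>k. c (Suc k))"
      have eq: "c 0 * ((omega * z + cnj (omega * z))^n - (z + cnj z)^n)
          + (z^3 + cnj z^3) * (g (omega * z) - g z) = 0" for z
        using inv[rule_format, of z] unfolding ff_rec[OF n1] g_def P_omega
        by (simp add: algebra_simps)
      have "omega * \<i> + cnj (omega * \<i>) = - of_real (sqrt 3)"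
        unfolding omega_eq by (simp add: complex_eq_iff)
      moreover have "\<i> + cnj \<i> = 0" by simp
      ultimately have "c 0 * ((- of_real (sqrt 3))^n) = 0"
        using eq[of \<i>] n1 by (simp add: power_0_left)
      then have c0: "c 0 = 0" by simp
      have "g (omega * z) - g z = 0" for z
      proof (rule dense_zero[where h = "\<lambda>z. g (omega * z) - g z"])
        show "continuous_on UNIV (\<lambda>z. g (omega * z) - g z)"
          unfolding g_def
          by (intro continuous_intros continuous_on_compose2[OF ff_cont]) auto
        show "(z^3 + cnj z^3) * (g (omega * z) - g z) = 0" for z
          using eq[of z] c0 by simp
      qed
      then have "\<forall>k<(n - 3 + 2) div 3. c (Suc k) = 0"
        using less.IH[of "n - 3"] n1 unfolding g_def by auto
      moreover have d: "(n+2) div 3 = Suc ((n-3+2) div 3)" using n1 by presburger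
      ultimately show ?thesis using c0 unfolding d by (auto simp: less_Suc_eq_0_disj)
    qed
  qed
qed

theorem proposition21:
  fixes n :: nat and c :: "nat \<Rightarrow> complex"
  assumes "\<forall>z::complex. Pi_op (\<lambda>z w. \<Sum>k<(n + 2) div 3.
              c k * (z + w) ^ (n - 2 * k) * (z^2 - z * w + w^2) ^ k) z (cnj z) = 0"
  shows "\<forall>k<(n + 2) div 3. c k = 0"
proof -
  define f where "f = ff n c"
  have co1: "cnj (omega^2 * z) = omega * cnj z" for z
  proof -
    have o4: "omega^2 * omega^2 = omega^3 * omega" by (simp add: power2_eq_square power3_eq_cube)
    have "cnj (omega^2 * z) = (omega^2 * omega^2) * cnj z" by (simp add: cnj_omega)
    then show ?thesis using o4 omega3 by simp
  qed
  have co2: "cnj (omega * z) = omega^2 * cnj z" for z by (simp add: cnj_omega)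
  have h: "2 * f z = f (omega^2 * z) + f (omega * z)" for z
  proof -
    have raw: "(2 * f z - f (omega^2 * z) - f (omega * z)) / 3 = 0"
      using assms[rule_format, of z] unfolding Pi_op_def f_def ff_def co1 co2 by simp
    then show ?thesis by (simp add: algebra_simps)
  qed
  have "f (omega * z) = f z" for z
  proof -
    have "2 * f (omega * z) = f (omega^2 * (omega * z)) + f (omega * (omega * z))" by (rule h)
    also have "omega^2 * (omega * z) = z" using omega3 by (simp add: power2_eq_square power3_eq_cube mult.assoc[symmetric])
    also have "omega * (omega * z) = omega^2 * z" by (simp add: power2_eq_square)
    finally have "2 * f (omega * z) = f z + f (omega^2 * z)" .
    then show ?thesis using h[of z] lin3 by blast
  qed
  then show ?thesis using main[of n] unfolding f_def by blast
qed

end
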